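(* Let $\mathcal A$ be an associative unital algebra and $a_0,\dots,a_n\in\mathcal A$ invertible ($n\ge1$). Then in the cyclic quotient of noncommutative differential forms, $$\{a_1,\dots,a_n\}+\sum_{i=0}^{n-1}(-1)^{i+1}\{a_0,\dots,a_{i-1},a_ia_{i+1},a_{i+2},\dots,a_n\}+(-1)^{n+1}\{a_0,\dots,a_{n-1}\}=0.$$ For example $\{a\}-\{ab\}+\{b\}=0$ and $\{b,c\}-\{ab,c\}+\{a,bc\}-\{a,b\}=0$.
   Context: Let $\Omega^\bullet\mathcal A$ be the noncommutative de Rham algebra of $\mathcal A$: the graded algebra generated by $\mathcal A$ in degree $0$ and symbols $da$ in degree $1$, with $d(ab)=da\,b+a\,db$, $d1=0$, extended to a differential $d$ with $d^2=0$ and the graded Leibniz rule. Its cyclic quotient is $\Omega^\bullet\mathcal A/[\Omega^\bullet\mathcal A,\Omega^\bullet\mathcal A]$ (graded commutators), so that $\omega_1\omega_2=(-1)^{|\omega_1||\omega_2|}\omega_2\omega_1$ there. For invertible $a_1,\dots,a_n$, $\{a_1,\dots,a_n\}$ denotes the class of $da_1\,da_2\cdots da_n\,a_n^{-1}\cdots a_1^{-1}$ (the noncommutative analogue of $d\log a_1\wedge\dots\wedge d\log a_n$). *)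

theory Defs
  imports Main
begin

text \<open>
The ground field is 'k; the unital associative k-algebra is the ring 'a
with scalar action sc.  Omega A is the quotient of the free (noncommutative,
unital) k-algebra on letters  Lt a  (a in A, degree 0) and  Dl a  (the symbol da, degree 1)
by the two-sided ideal generated by the defining relations.  Elements of the free
algebra are finitely supported functions  'a letter list => 'k ; a formal
combination is written as a list of (coefficient, word) pairs.
\<close>

datatype 'a letter = Lt 'a | Dl 'a

definition is_k_algebra :: "('k::field \<Rightarrow> 'a::ring_1 \<Rightarrow> 'a) \<Rightarrow> bool" where
  "is_k_algebra sc \<longleftrightarrow>
     (\<forall>c x y. sc c (x + y) = sc c x + sc c y) \<and>
     (\<forall>c e x. sc (c + e) x = sc c x + sc e x) \<and>
     (\<forall>c e x. sc (c * e) x = sc c (sc e x)) \<and>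
     (\<forall>x. sc 1 x = x) \<and>
     (\<forall>c x y. sc c (x * y) = sc c x * y) \<and>
     (\<forall>c x y. sc c (x * y) = x * sc c y)"

definition invertible_el :: "'a::ring_1 \<Rightarrow> bool" where
  "invertible_el a \<longleftrightarrow> (\<exists>b. a * b = 1 \<and> b * a = 1)"

definition inv_el :: "'a::ring_1 \<Rightarrow> 'a" where
  "inv_el a = (THE b. a * b = 1 \<and> b * a = 1)"

definition fm :: "('k::field \<times> 'g list) list \<Rightarrow> 'g list \<Rightarrow> 'k" where
  "fm xs = (\<lambda>w. sum_list (map (\<lambda>(c, v). if v = w then c else 0) xs))"

definition scale_comb :: "'k::field \<Rightarrow> ('k \<times> 'g list) list \<Rightarrow> ('k \<times> 'g list) list" where
  "scale_comb c xs = map (\<lambda>(e, w). (c * e, w)) xs"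

definition wdeg :: "'a letter list \<Rightarrow> nat" where
  "wdeg w = length (filter (\<lambda>l. case l of Dl _ \<Rightarrow> True | Lt _ \<Rightarrow> False) w)"

definition omega_rels :: "('k::field \<Rightarrow> 'a::ring_1 \<Rightarrow> 'a) \<Rightarrow> ('k \<times> 'a letter list) list set" where
  "omega_rels sc =
     {[(1, [Lt (a + b)]), (-1, [Lt a]), (-1, [Lt b])] | a b. True} \<union>
     {[(1, [Lt (sc c a)]), (-c, [Lt a])] | c a. True} \<union>
     {[(1, [Lt a, Lt b]), (-1, [Lt (a * b)])] | a b. True} \<union>
     {[(1, []), (-1, [Lt 1])]} \<union>
     {[(1, [Dl (a + b)]), (-1, [Dl a]), (-1, [Dl b])] | a b. True} \<union>
     {[(1, [Dl (sc c a)]), (-c, [Dl a])] | c a. True} \<union>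
     {[(1, [Dl (a * b)]), (-1, [Dl a, Lt b]), (-1, [Lt a, Dl b])] | a b. True} \<union>
     {[(1, [Dl 1])]}"

definition cyc_gens :: "('k::field \<Rightarrow> 'a::ring_1 \<Rightarrow> 'a) \<Rightarrow> ('a letter list \<Rightarrow> 'k) set" where
  "cyc_gens sc =
     {fm (map (\<lambda>(c, w). (c, u @ w @ v)) r) | r u v. r \<in> omega_rels sc} \<union>
     {fm [(1, w1 @ w2), (- ((-1) ^ (wdeg w1 * wdeg w2)), w2 @ w1)] | w1 w2. True}"

inductive_set kspan :: "('g \<Rightarrow> 'k::field) set \<Rightarrow> ('g \<Rightarrow> 'k) set" for S where
  zero: "(\<lambda>_. 0) \<in> kspan S"
| step: "x \<in> S \<Longrightarrow> y \<in> kspan S \<Longrightarrow> (\<lambda>w. c * x w + y w) \<in> kspan S"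

text \<open>A formal combination represents zero in the cyclic quotient
  Omega A / [Omega A, Omega A] iff its image in the free algebra lies in
  (relation ideal) + (graded commutators).\<close>
definition cyc_zero :: "('k::field \<Rightarrow> 'a::ring_1 \<Rightarrow> 'a) \<Rightarrow> ('k \<times> 'a letter list) list \<Rightarrow> bool" where
  "cyc_zero sc xs \<longleftrightarrow> fm xs \<in> kspan (cyc_gens sc)"

text \<open>The class  {a_1,...,a_n} = da_1 ... da_n a_n^{-1} ... a_1^{-1}.\<close>
definition dlog :: "'a::ring_1 list \<Rightarrow> ('k::field \<times> 'a letter list) list" where
  "dlog as = [(1, map Dl as @ map (\<lambda>a. Lt (inv_el a)) (rev as))]"

end

theory Submission
  imports Defs "HOL-Library.Function_Algebras"
begin

definition sm :: "'k::field \<Rightarrow> ('g \<Rightarrow> 'k) \<Rightarrow> ('g \<Rightarrow> 'k)" where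
  "sm c f = (\<lambda>w. c * f w)"

definition dw :: "'g list \<Rightarrow> 'g list \<Rightarrow> 'k::field" where
  "dw w = (\<lambda>v. if w = v then 1 else 0)"

lemma fm_Nil: "fm [] = 0"
  by (simp add: fm_def fun_eq_iff)

lemma fm_Cons: "fm ((c, w) # xs) = sm c (dw w) + fm xs"
  by (auto simp: fm_def sm_def dw_def fun_eq_iff)

lemma fm_append: "fm (xs @ ys) = fm xs + fm ys"
  by (simp add: fm_def fun_eq_iff)

lemma fm_scale: "fm (scale_comb c xs) = sm c (fm xs)"
proof (induction xs)
  case Nil then show ?case by (simp add: scale_comb_def fm_Nil sm_def fun_eq_iff)
next
  case (Cons p xs)
  obtain e w where p: "p = (e, w)" by (cases p)
  have "scale_comb c (p # xs) = (c * e, w) # scale_comb c xs"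
    by (simp add: scale_comb_def p)
  then show ?case using Cons
    by (simp add: fm_Cons p sm_def fun_eq_iff distrib_left)
qed

lemma fm_concat: "fm (concat xss) = sum_list (map fm xss)"
  by (induction xss) (simp_all add: fm_Nil fm_append)

lemma sum_list_apply: "sum_list (map f xs) w = sum_list (map (\<lambda>i. f i w) xs)"
  by (induction xs) simp_all

lemma kspan_add: "x \<in> kspan S \<Longrightarrow> y \<in> kspan S \<Longrightarrow> x + y \<in> kspan S"
proof (induction x rule: kspan.induct)
  case zero then show ?case by (simp add: zero_fun_def[symmetric])
next
  case (step x y' c)
  show ?case using kspan.step[OF step.hyps(1) step.IH[OF step.prems], of c]
    by (simp add: plus_fun_def add.assoc)
qed

lemma kspan_sm: "x \<in> kspan S \<Longrightarrow> sm c x \<in> kspan S"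
proof (induction x rule: kspan.induct)
  case zero then show ?case using kspan.zero by (simp add: sm_def)
next
  case (step x y e)
  show ?case using kspan.step[OF step.hyps(1) step.IH, of "c * e"]
    by (simp add: sm_def distrib_left mult.assoc)
qed

lemma kspan_gen: "x \<in> S \<Longrightarrow> x \<in> kspan S"
  using kspan.step[OF _ kspan.zero, of x S 1] by simp

lemma kspan_neg: "x \<in> kspan S \<Longrightarrow> - x \<in> kspan S"
  using kspan_sm[of x S "-1"] by (simp add: sm_def fun_Compl_def)

definition eqv :: "('g \<Rightarrow> 'k::field) set \<Rightarrow> ('g \<Rightarrow> 'k) \<Rightarrow> ('g \<Rightarrow> 'k) \<Rightarrow> bool" where
  "eqv V f g \<longleftrightarrow> f - g \<in> V"

lemma kspan_diff: "x \<in> kspan S \<Longrightarrow> y \<in> kspan S \<Longrightarrow> x - y \<in> kspan S"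
proof -
  assume a: "x \<in> kspan S" "y \<in> kspan S"
  have "x - y = x + - y" by simp
  then show ?thesis using kspan_add[OF a(1) kspan_neg[OF a(2)]] by simp
qed

lemma eqv_refl: "eqv (kspan S) f f"
proof -
  have "0 \<in> kspan S" unfolding zero_fun_def by (rule kspan.zero)
  then show ?thesis by (simp add: eqv_def)
qed

lemma eqv_trans: "eqv (kspan S) f g \<Longrightarrow> eqv (kspan S) g h \<Longrightarrow> eqv (kspan S) f h"
proof -
  assume a: "eqv (kspan S) f g" "eqv (kspan S) g h"
  have "f - h = (f - g) + (g - h)" by simp
  then show ?thesis using a kspan_add unfolding eqv_def by metis
qed

lemma eqv_sym: "eqv (kspan S) f g \<Longrightarrow> eqv (kspan S) g f"
proof -
  assume a: "eqv (kspan S) f g"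
  have "g - f = - (f - g)" by simp
  then show ?thesis using a kspan_neg unfolding eqv_def by metis
qed

lemma eqv_add: "eqv (kspan S) f g \<Longrightarrow> eqv (kspan S) f' g' \<Longrightarrow> eqv (kspan S) (f + f') (g + g')"
proof -
  assume a: "eqv (kspan S) f g" "eqv (kspan S) f' g'"
  have "(f + f') - (g + g') = (f - g) + (f' - g')" by (simp add: algebra_simps)
  then show ?thesis using a kspan_add unfolding eqv_def by metis
qed

lemma eqv_sm: "eqv (kspan S) f g \<Longrightarrow> eqv (kspan S) (sm c f) (sm c g)"
  unfolding eqv_def using kspan_sm[of "f - g" S c]
  by (simp add: sm_def fun_eq_iff right_diff_distrib fun_diff_def)

lemma eqv_sum_list: "(\<And>i. i \<in> set xs \<Longrightarrow> eqv (kspan S) (f i) (g i)) \<Longrightarrow>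
   eqv (kspan S) (sum_list (map f xs)) (sum_list (map g xs))"
proof (induction xs)
  case Nil then show ?case using eqv_refl by simp
next
  case (Cons x xs)
  have "eqv (kspan S) (f x + sum_list (map f xs)) (g x + sum_list (map g xs))"
    by (rule eqv_add) (use Cons in auto)
  then show ?case by (simp add: plus_fun_def)
qed

lemma rel_mult:
  fixes sc :: "'k::field \<Rightarrow> 'a::ring_1 \<Rightarrow> 'a"
  assumes "w1 = u @ [Lt x, Lt y] @ v" "w2 = u @ [Lt (x * y)] @ v"
  shows "eqv (kspan (cyc_gens sc)) (dw w1) (dw w2)"
proof -
  let ?r = "[(1, [Lt x, Lt y]), (-1, [Lt (x * y)])] :: ('k \<times> 'a letter list) list"
  have hr: "?r \<in> omega_rels sc" by (simp add: omega_rels_def)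
  have "fm (map (\<lambda>(c, w). (c, u @ w @ v)) ?r) \<in> cyc_gens sc"
    unfolding cyc_gens_def
    by (rule UnI1, rule CollectI, rule exI[of _ ?r], rule exI[of _ u], rule exI[of _ v]) (simp add: hr)
  then have "fm (map (\<lambda>(c, w). (c, u @ w @ v)) ?r) \<in> kspan (cyc_gens sc)" by (rule kspan_gen)
  moreover have "fm (map (\<lambda>(c, w). (c, u @ w @ v)) ?r) = dw w1 - dw w2"
    by (simp add: assms fm_def dw_def fun_eq_iff)
  ultimately show ?thesis by (simp add: eqv_def)
qed

lemma rel_one:
  fixes sc :: "'k::field \<Rightarrow> 'a::ring_1 \<Rightarrow> 'a"
  assumes "w1 = u @ [Lt 1] @ v" "w2 = u @ v"
  shows "eqv (kspan (cyc_gens sc)) (dw w1) (dw w2)"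
proof -
  let ?r = "[(1, []), (-1, [Lt 1])] :: ('k \<times> 'a letter list) list"
  have hr: "?r \<in> omega_rels sc" by (simp add: omega_rels_def)
  have "fm (map (\<lambda>(c, w). (c, u @ w @ v)) ?r) \<in> cyc_gens sc"
    unfolding cyc_gens_def
    by (rule UnI1, rule CollectI, rule exI[of _ ?r], rule exI[of _ u], rule exI[of _ v]) (simp add: hr)
  then have "fm (map (\<lambda>(c, w). (c, u @ w @ v)) ?r) \<in> kspan (cyc_gens sc)" by (rule kspan_gen)
  moreover have "fm (map (\<lambda>(c, w). (c, u @ w @ v)) ?r) = dw w2 - dw w1"
    by (simp add: assms fm_def dw_def fun_eq_iff)
  ultimately have "eqv (kspan (cyc_gens sc)) (dw w2) (dw w1)" by (simp add: eqv_def)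
  then show ?thesis by (rule eqv_sym)
qed

lemma rel_D:
  fixes sc :: "'k::field \<Rightarrow> 'a::ring_1 \<Rightarrow> 'a"
  assumes "w1 = u @ [Dl (x * y)] @ v" "w2 = u @ [Dl x, Lt y] @ v" "w3 = u @ [Lt x, Dl y] @ v"
  shows "eqv (kspan (cyc_gens sc)) (dw w1) (dw w2 + dw w3)"
proof -
  let ?r = "[(1, [Dl (x * y)]), (-1, [Dl x, Lt y]), (-1, [Lt x, Dl y])] :: ('k \<times> 'a letter list) list"
  have hr: "?r \<in> omega_rels sc" by (simp add: omega_rels_def)
  have "fm (map (\<lambda>(c, w). (c, u @ w @ v)) ?r) \<in> cyc_gens sc"
    unfolding cyc_gens_def
    by (rule UnI1, rule CollectI, rule exI[of _ ?r], rule exI[of _ u], rule exI[of _ v]) (simp add: hr)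
  then have "fm (map (\<lambda>(c, w). (c, u @ w @ v)) ?r) \<in> kspan (cyc_gens sc)" by (rule kspan_gen)
  moreover have "fm (map (\<lambda>(c, w). (c, u @ w @ v)) ?r) = dw w1 - (dw w2 + dw w3)"
    by (simp add: assms fm_def dw_def fun_eq_iff)
  ultimately show ?thesis by (simp add: eqv_def)
qed

lemma rel_comm:
  fixes sc :: "'k::field \<Rightarrow> 'a::ring_1 \<Rightarrow> 'a"
  assumes "wdeg w1 = 0"
  shows "eqv (kspan (cyc_gens sc)) (dw (w1 @ w2)) (dw (w2 @ w1))"
proof -
  have "fm [(1, w1 @ w2), (- ((-1) ^ (wdeg w1 * wdeg w2)), w2 @ w1)] \<in> cyc_gens sc"
    unfolding cyc_gens_def
    by (rule UnI2, rule CollectI, rule exI[of _ w1], rule exI[of _ w2]) simp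
  then have "fm [(1, w1 @ w2), (- ((-1) ^ (wdeg w1 * wdeg w2)), w2 @ w1)] \<in> kspan (cyc_gens sc)"
    by (rule kspan_gen)
  moreover have "fm [(1, w1 @ w2), (- ((-1) ^ (wdeg w1 * wdeg w2)), w2 @ w1)] = dw (w1 @ w2) - dw (w2 @ w1)"
    by (simp add: assms fm_def dw_def fun_eq_iff)
  ultimately show ?thesis unfolding eqv_def by metis
qed

lemma inv_unique:
  fixes x b b' :: "'a::ring_1"
  assumes "x * b = 1" "b' * x = 1"
  shows "b' = b"
proof -
  have "b' = b' * (x * b)" using assms(1) by simp
  also have "\<dots> = (b' * x) * b" by (simp add: mult.assoc)
  also have "\<dots> = b" using assms(2) by simp
  finally show ?thesis .
qed

lemma inv_el_props:
  assumes "invertible_el x" shows "x * inv_el x = 1 \<and> inv_el x * x = 1"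
proof -
  obtain b where b: "x * b = 1 \<and> b * x = 1" using assms unfolding invertible_el_def by blast
  have "x * (THE b. x * b = 1 \<and> b * x = 1) = 1 \<and> (THE b. x * b = 1 \<and> b * x = 1) * x = 1"
  proof (rule theI[of _ b])
    show "x * b = 1 \<and> b * x = 1" by (rule b)
  next
    fix b' assume "x * b' = 1 \<and> b' * x = 1"
    then show "b' = b" using b inv_unique[of x b b'] by blast
  qed
  then show ?thesis unfolding inv_el_def .
qed

lemma inv_el_mult:
  assumes "invertible_el x" "invertible_el y"
  shows "inv_el (x * y) = inv_el y * inv_el x"
proof -
  have hx: "x * inv_el x = 1" "inv_el x * x = 1" using inv_el_props[OF assms(1)] by auto
  have hy: "y * inv_el y = 1" "inv_el y * y = 1" using inv_el_props[OF assms(2)] by auto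
  have h1: "(x * y) * (inv_el y * inv_el x) = 1"
  proof -
    have "(x * y) * (inv_el y * inv_el x) = x * (y * inv_el y) * inv_el x" by (simp add: mult.assoc)
    also have "\<dots> = 1" using hx hy by simp
    finally show ?thesis .
  qed
  have h2: "(inv_el y * inv_el x) * (x * y) = 1"
  proof -
    have "(inv_el y * inv_el x) * (x * y) = inv_el y * (inv_el x * x) * y" by (simp add: mult.assoc)
    also have "\<dots> = 1" using hx hy by simp
    finally show ?thesis .
  qed
  show ?thesis unfolding inv_el_def[of "x * y"]
  proof (rule the_equality)
    show "x * y * (inv_el y * inv_el x) = 1 \<and> inv_el y * inv_el x * (x * y) = 1" using h1 h2 by simp
  next
    fix b assume "x * y * b = 1 \<and> b * (x * y) = 1"
    then show "b = inv_el y * inv_el x" using inv_unique[of "x * y" "inv_el y * inv_el x" b] h1 by blast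
  qed
qed

lemma fm_dlog: "fm (dlog as :: ('k::field \<times> 'a letter list) list) =
    dw (map Dl as @ map (\<lambda>a. Lt (inv_el a)) (rev (as :: 'a::ring_1 list)))"
  by (simp add: dlog_def fm_Cons fm_Nil sm_def)

lemma upt_split3: "i < n \<Longrightarrow> [0..<Suc n] = [0..<i] @ [i, Suc i] @ [Suc (Suc i)..<Suc n]"
proof -
  assume "i < n"
  then have "[0..<Suc n] = [0..<i] @ [i..<Suc n]"
    using upt_add_eq_append[of 0 i "Suc n - i"] by simp
  also have "[i..<Suc n] = i # Suc i # [Suc (Suc i)..<Suc n]"
    using \<open>i < n\<close> by (simp add: upt_conv_Cons)
  finally show ?thesis by simp
qed

lemma telescope:
  fixes y :: "nat \<Rightarrow> 'g \<Rightarrow> 'k::field"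
  shows "y 0 + (sum_list (map (\<lambda>i. sm ((-1) ^ (i + 1)) (y i + y (Suc i))) [0..<n])
           + sm ((-1) ^ (n + 1)) (y n)) = 0"
proof -
  have "y 0 w + (sum_list (map (\<lambda>i. (-1) ^ (i + 1) * (y i w + y (Suc i) w)) [0..<n])
           + (-1) ^ (n + 1) * y n w) = 0" for w
  proof (induction n)
    case 0 then show ?case by simp
  next
    case (Suc n)
    then show ?case by (simp add: algebra_simps)
  qed
  then show ?thesis by (simp add: fun_eq_iff sum_list_apply sm_def)
qed

declare eqv_trans[trans]

theorem theorem4p7:
  fixes sc :: "'k::field \<Rightarrow> 'a::ring_1 \<Rightarrow> 'a"
    and a :: "nat \<Rightarrow> 'a"
    and n :: nat
  assumes alg: "is_k_algebra sc"
    and n1: "n \<ge> 1"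
    and inv: "\<And>i. i \<le> n \<Longrightarrow> invertible_el (a i)"
  shows "cyc_zero sc
           (dlog (map a [1..<n+1])
            @ concat (map (\<lambda>i. scale_comb ((-1) ^ (i + 1))
                  (dlog (map a [0..<i] @ [a i * a (i + 1)] @ map a [i + 2..<n + 1]))) [0..<n])
            @ scale_comb ((-1) ^ (n + 1)) (dlog (map a [0..<n])) :: ('k \<times> 'a letter list) list)"
proof -
  let ?V = "kspan (cyc_gens sc)"
  define D where "D i j = map Dl (map a [i..<j])" for i j
  define B where "B i j = map (\<lambda>x. Lt (inv_el x)) (rev (map a [i..<j]))" for i j
  define Y where "Y j = D 0 j @ [Lt (a j)] @ D (Suc j) (Suc n) @ B 0 (Suc n)" for j
  have ainv: "a i * inv_el (a i) = 1" "inv_el (a i) * a i = 1" if "i \<le> n" for i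
    using inv_el_props[OF inv[OF that]] by auto
  have B0: "B 0 (Suc n) = B 1 (Suc n) @ [Lt (inv_el (a 0))]"
    unfolding B_def by (simp add: upt_conv_Cons del: upt_Suc)
  have A: "eqv ?V (fm (dlog (map a [1..<n+1]) :: ('k \<times> 'a letter list) list)) (dw (Y 0))"
  proof -
    have Y0: "Y 0 = [Lt (a 0)] @ (D 1 (Suc n) @ B 1 (Suc n) @ [Lt (inv_el (a 0))])"
      by (simp add: Y_def B0 D_def)
    have F: "fm (dlog (map a [1..<n+1]) :: ('k \<times> 'a letter list) list)
          = dw ((D 1 (Suc n) @ B 1 (Suc n)) @ [])"
      by (simp add: fm_dlog D_def B_def del: upt_Suc)
    have "eqv ?V (dw ([Lt (a 0)] @ (D 1 (Suc n) @ B 1 (Suc n) @ [Lt (inv_el (a 0))])))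
                 (dw ((D 1 (Suc n) @ B 1 (Suc n) @ [Lt (inv_el (a 0))]) @ [Lt (a 0)]))"
      by (rule rel_comm) (simp add: wdeg_def)
    also have "eqv ?V (dw ((D 1 (Suc n) @ B 1 (Suc n) @ [Lt (inv_el (a 0))]) @ [Lt (a 0)]))
                 (dw ((D 1 (Suc n) @ B 1 (Suc n)) @ [Lt (inv_el (a 0) * a 0)] @ []))"
      by (rule rel_mult[where u="D 1 (Suc n) @ B 1 (Suc n)" and v="[]"]) simp_all
    also have "eqv ?V (dw ((D 1 (Suc n) @ B 1 (Suc n)) @ [Lt (inv_el (a 0) * a 0)] @ []))
                 (dw ((D 1 (Suc n) @ B 1 (Suc n)) @ []))"
      by (rule rel_one[where u="D 1 (Suc n) @ B 1 (Suc n)" and v="[]"]) (simp_all add: ainv)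
    finally have "eqv ?V (dw (Y 0)) (fm (dlog (map a [1..<n+1]) :: ('k \<times> 'a letter list) list))"
      unfolding Y0 F .
    then show ?thesis by (rule eqv_sym)
  qed
  have Bn: "B 0 (Suc n) = [Lt (inv_el (a n))] @ B 0 n"
    unfolding B_def by simp
  have C: "eqv ?V (fm (dlog (map a [0..<n]) :: ('k \<times> 'a letter list) list)) (dw (Y n))"
  proof -
    have Yn: "Y n = D 0 n @ [Lt (a n), Lt (inv_el (a n))] @ B 0 n"
      by (simp add: Y_def Bn D_def)
    have F: "fm (dlog (map a [0..<n]) :: ('k \<times> 'a letter list) list) = dw (D 0 n @ B 0 n)"
      by (simp add: fm_dlog D_def B_def del: upt_Suc)
    have "eqv ?V (dw (D 0 n @ [Lt (a n), Lt (inv_el (a n))] @ B 0 n))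
                 (dw (D 0 n @ [Lt (a n * inv_el (a n))] @ B 0 n))"
      by (rule rel_mult[where u="D 0 n" and v="B 0 n"]) simp_all
    also have "eqv ?V (dw (D 0 n @ [Lt (a n * inv_el (a n))] @ B 0 n)) (dw (D 0 n @ B 0 n))"
      by (rule rel_one[where u="D 0 n" and v="B 0 n"]) (simp_all add: ainv)
    finally have "eqv ?V (dw (Y n)) (fm (dlog (map a [0..<n]) :: ('k \<times> 'a letter list) list))"
      unfolding Yn F .
    then show ?thesis by (rule eqv_sym)
  qed
  have Bi: "eqv ?V (fm (dlog (map a [0..<i] @ [a i * a (i + 1)] @ map a [i + 2..<n + 1])
              :: ('k \<times> 'a letter list) list)) (dw (Y i) + dw (Y (Suc i)))" if "i < n" for i
  proof -
    have inv_c: "inv_el (a i * a (Suc i)) = inv_el (a (Suc i)) * inv_el (a i)"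
      using that by (intro inv_el_mult inv) simp_all
    have Bsplit: "B 0 (Suc n) = B (Suc (Suc i)) (Suc n) @ [Lt (inv_el (a (Suc i))), Lt (inv_el (a i))] @ B 0 i"
      unfolding B_def using upt_split3[OF that] by (simp del: upt_Suc)
    have F: "fm (dlog (map a [0..<i] @ [a i * a (i + 1)] @ map a [i + 2..<n + 1])
              :: ('k \<times> 'a letter list) list) =
         dw ((D 0 i @ [Dl (a i * a (Suc i))] @ D (Suc (Suc i)) (Suc n) @ B (Suc (Suc i)) (Suc n))
             @ [Lt (inv_el (a (Suc i)) * inv_el (a i))] @ B 0 i)"
      by (simp add: fm_dlog D_def B_def inv_c del: upt_Suc)
    have DSi: "D (Suc i) (Suc n) = [Dl (a (Suc i))] @ D (Suc (Suc i)) (Suc n)"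
      unfolding D_def using that by (simp add: upt_conv_Cons del: upt_Suc)
    have D0Si: "D 0 (Suc i) = D 0 i @ [Dl (a i)]"
      unfolding D_def by simp
    have "eqv ?V (dw ((D 0 i @ [Dl (a i * a (Suc i))] @ D (Suc (Suc i)) (Suc n) @ B (Suc (Suc i)) (Suc n))
             @ [Lt (inv_el (a (Suc i)) * inv_el (a i))] @ B 0 i))
          (dw ((D 0 i @ [Dl (a i * a (Suc i))] @ D (Suc (Suc i)) (Suc n) @ B (Suc (Suc i)) (Suc n))
             @ [Lt (inv_el (a (Suc i))), Lt (inv_el (a i))] @ B 0 i))"
      by (rule eqv_sym, rule rel_mult[where u="D 0 i @ [Dl (a i * a (Suc i))] @ D (Suc (Suc i)) (Suc n) @ B (Suc (Suc i)) (Suc n)" and v="B 0 i"]) simp_all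
    also have "dw ((D 0 i @ [Dl (a i * a (Suc i))] @ D (Suc (Suc i)) (Suc n) @ B (Suc (Suc i)) (Suc n))
             @ [Lt (inv_el (a (Suc i))), Lt (inv_el (a i))] @ B 0 i)
        = dw (D 0 i @ [Dl (a i * a (Suc i))] @ (D (Suc (Suc i)) (Suc n) @ B 0 (Suc n)))"
      by (simp add: Bsplit)
    also have "eqv ?V (dw (D 0 i @ [Dl (a i * a (Suc i))] @ (D (Suc (Suc i)) (Suc n) @ B 0 (Suc n))))
        (dw (D 0 i @ [Dl (a i), Lt (a (Suc i))] @ (D (Suc (Suc i)) (Suc n) @ B 0 (Suc n)))
         + dw (D 0 i @ [Lt (a i), Dl (a (Suc i))] @ (D (Suc (Suc i)) (Suc n) @ B 0 (Suc n))))"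
      by (rule rel_D[where u="D 0 i" and v="D (Suc (Suc i)) (Suc n) @ B 0 (Suc n)"]) simp_all
    also have "dw (D 0 i @ [Dl (a i), Lt (a (Suc i))] @ (D (Suc (Suc i)) (Suc n) @ B 0 (Suc n)))
         + dw (D 0 i @ [Lt (a i), Dl (a (Suc i))] @ (D (Suc (Suc i)) (Suc n) @ B 0 (Suc n)))
         = dw (Y i) + dw (Y (Suc i))"
      by (simp add: Y_def DSi D0Si add.commute)
    finally show ?thesis unfolding F .
  qed
  let ?T = "\<lambda>i. (dlog (map a [0..<i] @ [a i * a (i + 1)] @ map a [i + 2..<n + 1])
              :: ('k \<times> 'a letter list) list)"
  have S: "eqv ?V (sum_list (map (\<lambda>i. sm ((-1) ^ (i + 1)) (fm (?T i))) [0..<n]))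
      (sum_list (map (\<lambda>i. sm ((-1) ^ (i + 1)) (dw (Y i) + dw (Y (Suc i)))) [0..<n]))"
    by (rule eqv_sum_list, rule eqv_sm, rule Bi) simp
  have tot: "eqv ?V (fm (dlog (map a [1..<n+1]) :: ('k \<times> 'a letter list) list) +
        (sum_list (map (\<lambda>i. sm ((-1) ^ (i + 1)) (fm (?T i))) [0..<n])
         + sm ((-1) ^ (n + 1)) (fm (dlog (map a [0..<n]) :: ('k \<times> 'a letter list) list))))
      (dw (Y 0) + (sum_list (map (\<lambda>i. sm ((-1) ^ (i + 1)) (dw (Y i) + dw (Y (Suc i)))) [0..<n])
         + sm ((-1) ^ (n + 1)) (dw (Y n))))"
    by (intro eqv_add eqv_sm A S C)
  have Z: "dw (Y 0) + (sum_list (map (\<lambda>i. sm ((-1) ^ (i + 1)) (dw (Y i) + dw (Y (Suc i)))) [0..<n])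
         + sm ((-1) ^ (n + 1)) (dw (Y n))) = (0 :: 'a letter list \<Rightarrow> 'k)"
    by (rule telescope[of "\<lambda>j. dw (Y j)"])
  show ?thesis unfolding cyc_zero_def
    using tot unfolding Z eqv_def
    by (simp only: fm_append fm_concat fm_scale map_map o_def diff_zero)
qed

end
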